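(* Let $T_r$ be a resistive dyadic tree with resistances $r=(r_n^k)_{n\ge 1,\,0\le k\le 2^n-1}$ (notation in the context), and assume $$\sum_{n\geq 1} \frac{1}{2^n}\max_{0\le k\le 2^n-1} r_n^k < +\infty .$$ Then for every $p\in H^1(T_r)$ the sequence $(\tilde p_n)_{n\ge 0}$ converges strongly in $L^2(\mathbb{Z}_2)$ to some $\tilde p\in L^2(\mathbb{Z}_2)$, and the linear operator $\gamma_0: p\mapsto \tilde p$ is a bounded linear operator from $H^1(T_r)$ to $L^2(\mathbb{Z}_2)$.
   Context: The infinite dyadic tree $T$ has vertex set $V$ equal to the disjoint union over $n\ge 0$ of the sets $\mathbb{Z}/2^n\mathbb{Z}$; $x_n^k$ denotes $k\in\mathbb{Z}/2^n\mathbb{Z}$ ($0\le k\le 2^n-1$), the $k$-th vertex of generation $n$, and $x_0^0$ is the root. For $n<m$, $\varphi_n^m:\mathbb{Z}/2^m\mathbb{Z}\to\mathbb{Z}/2^n\mathbb{Z}$ is the canonical surjection. For $n\ge1$, the edge $e_n^k$ joins $x_n^k$ to its parent $\varphi_{n-1}^n(x_n^k)$, and these are all the edges. A resistive dyadic tree $T_r$ is $T$ together with positive numbers $r_n^k$ ($n\ge1$, $0\le k\le 2^n-1$), $r_n^k$ being the resistance of $e_n^k$. For $p:V\to\mathbb{R}$ set $$|p|_{H^1}^2=\sum_{n\ge1}\sum_{k=0}^{2^n-1}\frac{|p(x_n^k)-p(\varphi_{n-1}^n(x_n^k))|^2}{r_n^k},$$ and $H^1(T_r)=\{p:V\to\mathbb{R}: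 |p|_{H^1}<\infty\}$, normed by $\|p\|_{H^1(T_r)}^2=|p(x_0^0)|^2+|p|_{H^1}^2$. $\mathbb{Z}_2$ is the ring of 2-adic integers with 2-adic absolute value $|\cdot|_2$ and Haar probability measure $\mu$ (so $\mu(a+2^n\mathbb{Z}_2)=2^{-n}$); $L^2(\mathbb{Z}_2)$ is taken with respect to $\mu$. For $p:V\to\mathbb{R}$ and $n\ge0$, $\tilde p_n:\mathbb{Z}_2\to\mathbb{R}$ is defined by $\tilde p_n(x)=p(x_n^a)$, where $a\in\{0,\dots,2^n-1\}$ is the unique integer with $x\in a+2^n\mathbb{Z}_2$. *)

theory Defs
  imports "HOL-Probability.Probability"
begin

text \<open>Vertices of the dyadic tree: x_n^k is encoded by the pair (n,k), k < 2^n.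
  A function p on V is a map nat \<Rightarrow> nat \<Rightarrow> real, only values p n k with k < 2^n matter.
  The parent of x_n^k (n \<ge> 1) is x_(n-1)^(k mod 2^(n-1)).\<close>

definition H1_term :: "(nat \<Rightarrow> nat \<Rightarrow> real) \<Rightarrow> (nat \<Rightarrow> nat \<Rightarrow> real) \<Rightarrow> nat \<Rightarrow> real" where
  "H1_term r p n = (\<Sum>k<2^n. (p n k - p (n - 1) (k mod 2^(n - 1)))\<^sup>2 / r n k)"

definition in_H1 :: "(nat \<Rightarrow> nat \<Rightarrow> real) \<Rightarrow> (nat \<Rightarrow> nat \<Rightarrow> real) \<Rightarrow> bool" where
  "in_H1 r p \<longleftrightarrow> summable (\<lambda>n. H1_term r p (Suc n))"

definition H1_seminorm_sq :: "(nat \<Rightarrow> nat \<Rightarrow> real) \<Rightarrow> (nat \<Rightarrow> nat \<Rightarrow> real) \<Rightarrow> real" where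
  "H1_seminorm_sq r p = (\<Sum>n. H1_term r p (Suc n))"

definition H1_norm :: "(nat \<Rightarrow> nat \<Rightarrow> real) \<Rightarrow> (nat \<Rightarrow> nat \<Rightarrow> real) \<Rightarrow> real" where
  "H1_norm r p = sqrt ((p 0 0)\<^sup>2 + H1_seminorm_sq r p)"

text \<open>The 2-adic integers are modelled by their binary digit sequences
  x = \<Sum>_i x_i 2^i (x_i \<in> {0,1}, encoded as bool); the Haar probability measure
  corresponds to the product of fair coin measures on the digits.\<close>
type_synonym Z2 = "nat \<Rightarrow> bool"

definition haar_Z2 :: "Z2 measure" where
  "haar_Z2 = (\<Pi>\<^sub>M i\<in>(UNIV::nat set). measure_pmf (bernoulli_pmf (1/2)))"

text \<open>The unique a \<in> {0..2^n-1} with x \<in> a + 2^n Z_2.\<close>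
definition res :: "nat \<Rightarrow> Z2 \<Rightarrow> nat" where
  "res n x = (\<Sum>i<n. if x i then 2^i else 0)"

definition tilde :: "(nat \<Rightarrow> nat \<Rightarrow> real) \<Rightarrow> nat \<Rightarrow> Z2 \<Rightarrow> real" where
  "tilde p n x = p n (res n x)"

definition in_L2 :: "(Z2 \<Rightarrow> real) \<Rightarrow> bool" where
  "in_L2 f \<longleftrightarrow> f \<in> borel_measurable haar_Z2 \<and> integrable haar_Z2 (\<lambda>x. (f x)\<^sup>2)"

definition L2_norm :: "(Z2 \<Rightarrow> real) \<Rightarrow> real" where
  "L2_norm f = sqrt (\<integral>x. (f x)\<^sup>2 \<partial>haar_Z2)"

definition L2_converges :: "(nat \<Rightarrow> Z2 \<Rightarrow> real) \<Rightarrow> (Z2 \<Rightarrow> real) \<Rightarrow> bool" where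
  "L2_converges fs f \<longleftrightarrow> (\<lambda>n. L2_norm (\<lambda>x. fs n x - f x)) \<longlonglongrightarrow> 0"

text \<open>The trace operator gamma_0 (a chosen representative of the L^2 limit).\<close>
definition gamma0 :: "(nat \<Rightarrow> nat \<Rightarrow> real) \<Rightarrow> Z2 \<Rightarrow> real" where
  "gamma0 p = (SOME f. in_L2 f \<and> L2_converges (tilde p) f)"

end

theory Submission
  imports Defs
begin


lemma res_Suc0: "res (Suc n) x = (if x 0 then 1 else 0) + 2 * res n (\<lambda>i. x (Suc i))"
  unfolding res_def by (subst sum.lessThan_Suc_shift) (simp add: sum_distrib_left if_distrib mult.assoc cong: if_cong)

lemma res_Suc: "res (Suc n) x = res n x + (if x n then 2^n else 0)"
  unfolding res_def by simp

lemma res_less: "res n x < 2^n"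
proof (induction n arbitrary: x)
  case 0 then show ?case by (simp add: res_def)
next
  case (Suc n)
  have "res n (\<lambda>i. x (Suc i)) < 2^n" by (rule Suc)
  then show ?case unfolding res_Suc0 by simp
qed

lemma res_mod: "res n x = res (Suc n) x mod 2^n"
  by (simp add: res_Suc res_less)

lemma res_inj: "res n x = res n y \<Longrightarrow> i < n \<Longrightarrow> x i = y i"
proof (induction n arbitrary: x y i)
  case 0 then show ?case by simp
next
  case (Suc n)
  have e: "(if x 0 then 1 else 0) + 2 * res n (\<lambda>i. x (Suc i)) = (if y 0 then 1 else 0) + 2 * res n (\<lambda>i. y (Suc i))"
    using Suc.prems(1) by (simp add: res_Suc0)
  then have "x 0 = y 0" by (auto split: if_splits; presburger)
  with e have e2: "res n (\<lambda>i. x (Suc i)) = res n (\<lambda>i. y (Suc i))" by auto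
  show ?case
  proof (cases i)
    case 0 then show ?thesis using \<open>x 0 = y 0\<close> by simp
  next
    case (Suc j) then show ?thesis using Suc.IH[OF e2, of j] Suc.prems by simp
  qed
qed

lemma res_bit: "k < 2^n \<Longrightarrow> res n (bit k) = k"
proof (induction n arbitrary: k)
  case 0 then show ?case by (simp add: res_def)
next
  case (Suc n)
  have "k div 2 < 2^n" using Suc.prems by auto
  then have "res n (bit (k div 2)) = k div 2" by (rule Suc.IH)
  moreover have "(\<lambda>i. bit k (Suc i)) = bit (k div 2)" by (simp add: bit_Suc)
  ultimately show ?case by (simp add: res_Suc0 bit_0)
qed



interpretation Z: product_prob_space "\<lambda>_::nat. measure_pmf (bernoulli_pmf (1/2))" UNIV
  by unfold_locales

lemma prob_haar: "prob_space haar_Z2"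
  unfolding haar_Z2_def by (rule Z.P.prob_space_axioms)

lemma space_haar: "space haar_Z2 = UNIV"
  unfolding haar_Z2_def by (simp add: space_PiM)

lemma res_iff: "k < 2^n \<Longrightarrow> res n x = k \<longleftrightarrow> (\<forall>i<n. x i = bit k i)"
proof
  assume k: "k < 2^n"
  show "res n x = k \<Longrightarrow> \<forall>i<n. x i = bit k i"
    using res_inj[of n x "bit k"] res_bit[OF k] by simp
  assume "\<forall>i<n. x i = bit k i"
  then have "res n x = res n (bit k)" unfolding res_def by (intro sum.cong) auto
  then show "res n x = k" using res_bit[OF k] by simp
qed

lemma res_set: "k < 2^n \<Longrightarrow> {x \<in> space haar_Z2. res n x = k} = {x \<in> space haar_Z2. \<forall>i\<in>{..<n}. x i \<in> {bit k i}}"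
  using res_iff[of k n] by auto



lemma comp_meas[measurable]: "(\<lambda>x. x i) \<in> haar_Z2 \<rightarrow>\<^sub>M count_space UNIV"
proof -
  have "(\<lambda>x. x i) \<in> haar_Z2 \<rightarrow>\<^sub>M measure_pmf (bernoulli_pmf (1/2))"
    unfolding haar_Z2_def by (rule measurable_component_singleton) simp
  moreover have "sets (measure_pmf (bernoulli_pmf (1/2))) = sets (count_space (UNIV::bool set))" by simp
  ultimately show ?thesis using measurable_cong_sets[OF refl] by blast
qed

lemma t1: "{x \<in> space haar_Z2. \<forall>i\<in>{..<n}. x i = bit k i} \<in> sets haar_Z2"
  by measurable

lemma res_sets: "{x \<in> space haar_Z2. res n x = k} \<in> sets haar_Z2"
proof (cases "k < 2^n")
  case True
  have "{x \<in> space haar_Z2. res n x = k} = {x \<in> space haar_Z2. \<forall>i\<in>{..<n}. x i = bit k i}"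
    using res_iff[OF True] by auto
  then show ?thesis using t1 by simp
next
  case False
  then have "{x \<in> space haar_Z2. res n x = k} = {}" using res_less[of n] by (metis (mono_tags, lifting) empty_Collect_eq)
  then show ?thesis by (metis sets.empty_sets)
qed

lemma res_prob: "k < 2^n \<Longrightarrow> measure haar_Z2 {x \<in> space haar_Z2. res n x = k} = 1/2^n"
proof -
  assume k: "k < 2^n"
  have "emeasure haar_Z2 {x \<in> space haar_Z2. \<forall>i\<in>{..<n}. x i \<in> {bit k i}} = (\<Prod>i\<in>{..<n}. emeasure (measure_pmf (bernoulli_pmf (1/2))) {bit k i})"
    unfolding haar_Z2_def by (rule Z.emeasure_PiM_Collect) auto
  also have "\<dots> = (\<Prod>i\<in>{..<n}. ennreal (1/2))"
    by (intro prod.cong refl) (simp add: emeasure_pmf_single)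
  also have "\<dots> = ennreal (1/2^n)" 
  proof -
    have "ennreal ((1/2)^n) = ennreal (1/2) ^ n" by (rule ennreal_power[symmetric]) simp
    then show ?thesis by (simp only: prod_constant card_lessThan power_one_over)
  qed
  finally show ?thesis using res_set[OF k] by (simp add: measure_def)
qed

lemma res_meas: "res n \<in> haar_Z2 \<rightarrow>\<^sub>M count_space UNIV"
proof (rule measurable_count_space_eq2_countable[THEN iffD2], intro conjI ballI)
  fix k :: nat
  have "res n -` {k} \<inter> space haar_Z2 = {x \<in> space haar_Z2. res n x = k}" by auto
  then show "res n -` {k} \<inter> space haar_Z2 \<in> sets haar_Z2" using res_sets by simp
qed simp

lemma res_fun_meas[measurable]: "(\<lambda>x. g (res n x)) \<in> borel_measurable haar_Z2"
  by (rule measurable_compose[OF res_meas]) simp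

lemma res_fun_integrable: "integrable haar_Z2 (\<lambda>x. (g (res n x))::real)"
proof -
  interpret prob_space haar_Z2 by (rule prob_haar)
  show ?thesis
  proof (rule integrable_const_bound[where B="\<Sum>k<2^n. \<bar>g k\<bar>"])
    show "AE x in haar_Z2. norm (g (res n x)) \<le> (\<Sum>k<2^n. \<bar>g k\<bar>)"
      using res_less[of n] by (auto intro!: member_le_sum[where f="\<lambda>k. \<bar>g k\<bar>"])
  qed simp
qed

lemma res_integral: "(\<integral>x. (g (res n x)::real) \<partial>haar_Z2) = (\<Sum>k<2^n. g k) / 2^n"
proof -
  interpret prob_space haar_Z2 by (rule prob_haar)
  define S where "S k = {x \<in> space haar_Z2. res n x = k}" for k
  have S: "S k \<in> sets haar_Z2" for k unfolding S_def by (rule res_sets)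
  have "\<And>x. g (res n x) = (\<Sum>k<2^n. g k * indicator (S k) x)"
  proof -
    fix x
    have "(\<Sum>k<2^n. g k * indicator (S k) x) = (\<Sum>k\<in>{res n x}. g k)"
      using res_less[of n x] by (intro sum.mono_neutral_cong_right) (auto simp: S_def space_haar indicator_def)
    then show "g (res n x) = (\<Sum>k<2^n. g k * indicator (S k) x)" by simp
  qed
  then have "(\<integral>x. g (res n x) \<partial>haar_Z2) = (\<integral>x. (\<Sum>k<2^n. g k * indicator (S k) x) \<partial>haar_Z2)"
    by simp
  also have "\<dots> = (\<Sum>k<2^n. (\<integral>x. g k * indicator (S k) x \<partial>haar_Z2))"
    by (rule Bochner_Integration.integral_sum) (intro integrable_mult_right integrable_real_indicator S, simp add: emeasure_eq_measure)
  also have "\<dots> = (\<Sum>k<2^n. g k * measure haar_Z2 (S k))"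
    using S by (intro sum.cong refl) (simp add: Int_absorb2 sets.sets_into_space)
  also have "\<dots> = (\<Sum>k<2^n. g k / 2^n)" by (intro sum.cong) (auto simp: res_prob S_def)
  finally show ?thesis by (simp add: sum_divide_distrib)
qed



lemma cs_series:
  fixes a w d :: "nat \<Rightarrow> real"
  assumes apos: "\<And>n. a n > 0" and sa: "summable a" and wnn: "\<And>n. w n \<ge> 0" and sw: "summable w"
    and dsq: "\<And>n. (d n)^2 = a n * w n"
  shows "summable (\<lambda>n. \<bar>d n\<bar>)" "(\<Sum>n. d n)^2 \<le> (\<Sum>n. a n) * (\<Sum>n. w n)"
proof -
  have key: "\<bar>d n\<bar> \<le> (t * a n + w n / t) / 2" if t: "t > 0" for t n
  proof -
    have "0 \<le> (t * a n - w n / t)^2" by simp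
    moreover have dd: "d n * d n = a n * w n" using dsq[of n] by (simp add: power2_eq_square)
    ultimately have "4 * (d n)^2 \<le> (t * a n + w n / t)^2"
      using t by (simp add: dd power2_eq_square field_simps) 
    then have "(2 * \<bar>d n\<bar>)^2 \<le> (t * a n + w n / t)^2" by (simp add: power2_eq_square)
    moreover have "0 \<le> t * a n + w n / t" using t apos[of n] wnn[of n] by (simp add: less_imp_le)
    ultimately have "2 * \<bar>d n\<bar> \<le> t * a n + w n / t" using power2_le_imp_le by blast
    then show ?thesis by simp
  qed
  have sum_t: "summable (\<lambda>n. (t * a n + w n / t) / 2)" for t
    using sa sw by (intro summable_divide summable_add summable_mult summable_divide)
  show sd: "summable (\<lambda>n. \<bar>d n\<bar>)"
    by (rule summable_comparison_test'[OF sum_t[of 1]]) (use key[of 1] in simp)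
  have bound: "\<bar>\<Sum>n. d n\<bar> \<le> (t * (\<Sum>n. a n) + (\<Sum>n. w n) / t) / 2" if t: "t > 0" for t
  proof -
    have "\<bar>\<Sum>n. d n\<bar> \<le> (\<Sum>n. \<bar>d n\<bar>)" using sd by (rule summable_rabs)
    also have "\<dots> \<le> (\<Sum>n. (t * a n + w n / t) / 2)"
      by (rule suminf_le) (use key[OF t] sd sum_t in auto)
    also have "\<dots> = (t * (\<Sum>n. a n) + (\<Sum>n. w n) / t) / 2"
    proof -
      have "(\<lambda>n. (t * a n + w n / t) / 2) sums ((t * (\<Sum>n. a n) + (\<Sum>n. w n) / t) / 2)"
        using sa sw by (intro sums_divide sums_add sums_mult summable_sums)
      then show ?thesis by (rule sums_unique[symmetric])
    qed
    finally show ?thesis .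
  qed
  define A where "A = (\<Sum>n. a n)"
  define S where "S = (\<Sum>n. w n)"
  have A: "A > 0" unfolding A_def using suminf_pos[OF sa apos] .
  have S0: "S \<ge> 0" unfolding S_def using suminf_nonneg[OF sw wnn] .
  show "(\<Sum>n. d n)^2 \<le> (\<Sum>n. a n) * (\<Sum>n. w n)"
  proof (cases "S = 0")
    case True
    then have "\<forall>n. w n = 0" using suminf_eq_zero_iff[OF sw] wnn unfolding S_def by auto
    then have "\<forall>n. d n = 0" using dsq by simp
    then show ?thesis using True A by (simp add: S_def A_def)
  next
    case False
    then have S: "S > 0" using S0 by simp
    define t where "t = sqrt (S / A)"
    have t: "t > 0" unfolding t_def using S A by simp
    have "t * A = sqrt (S * A)" unfolding t_def using S A
      by (simp add: real_sqrt_divide field_simps real_sqrt_mult)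
    moreover have "S / t = sqrt (S * A)" unfolding t_def using S A
      by (simp add: real_sqrt_divide field_simps real_sqrt_mult)
    ultimately have "\<bar>\<Sum>n. d n\<bar> \<le> sqrt (S * A)" using bound[OF t] unfolding A_def S_def by simp
    then have "(\<Sum>n. d n)^2 \<le> (sqrt (S * A))^2"
      by (metis abs_ge_zero power2_abs power_mono)
    then show ?thesis using S A by (simp add: A_def S_def mult.commute)
  qed
qed



definition aa :: "(nat \<Rightarrow> nat \<Rightarrow> real) \<Rightarrow> nat \<Rightarrow> real" where
  "aa r n = (1 / 2^(Suc n)) * Max ((r (Suc n)) ` {..<2^(Suc n)})"
definition dd :: "(nat \<Rightarrow> nat \<Rightarrow> real) \<Rightarrow> nat \<Rightarrow> Z2 \<Rightarrow> real" where
  "dd p n x = tilde p (Suc n) x - tilde p n x"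
definition ww :: "(nat \<Rightarrow> nat \<Rightarrow> real) \<Rightarrow> (nat \<Rightarrow> nat \<Rightarrow> real) \<Rightarrow> nat \<Rightarrow> Z2 \<Rightarrow> real" where
  "ww r p n x = (dd p n x)^2 / aa r n"

lemma Max_r_ge: 
  fixes r :: "nat \<Rightarrow> nat \<Rightarrow> real"
  assumes r_pos: "\<And>n k. n \<ge> 1 \<Longrightarrow> k < 2^n \<Longrightarrow> r n k > 0" and k: "k < 2^(Suc n)"
  shows "r (Suc n) k \<le> Max ((r (Suc n)) ` {..<2^(Suc n)})"
  using k by (intro Max_ge) auto

lemma aa_pos:
  assumes r_pos: "\<And>n k. n \<ge> 1 \<Longrightarrow> k < 2^n \<Longrightarrow> r n k > 0"
  shows "aa r n > 0"
proof -
  have "0 < r (Suc n) 0" by (rule r_pos) auto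
  also have "\<dots> \<le> Max ((r (Suc n)) ` {..<2^(Suc n)})" by (rule Max_r_ge[OF r_pos]) auto
  finally show ?thesis unfolding aa_def by simp
qed

lemma tilde_meas[measurable]: "tilde p n \<in> borel_measurable haar_Z2"
  unfolding tilde_def by (rule res_fun_meas)

lemma tilde_integrable: "integrable haar_Z2 (\<lambda>x. g (tilde p n x) :: real)"
  unfolding tilde_def by (rule res_fun_integrable)

lemma dd_res: "dd p n x = p (Suc n) (res (Suc n) x) - p n (res (Suc n) x mod 2^n)"
  unfolding dd_def tilde_def using res_mod[of n x] by simp

lemma dd_meas[measurable]: "dd p n \<in> borel_measurable haar_Z2"
  unfolding dd_def[abs_def] by measurable

lemma ww_meas[measurable]: "ww r p n \<in> borel_measurable haar_Z2"
  unfolding ww_def[abs_def] by measurable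

lemma ww_integrable: "integrable haar_Z2 (ww r p n)"
proof -
  have "ww r p n = (\<lambda>x. (\<lambda>k. (p (Suc n) k - p n (k mod 2^n))^2 / aa r n) (res (Suc n) x))"
    by (rule ext) (simp add: ww_def dd_res)
  then show ?thesis by (simp only:) (rule res_fun_integrable)
qed

lemma H1_term_nonneg:
  assumes r_pos: "\<And>n k. n \<ge> 1 \<Longrightarrow> k < 2^n \<Longrightarrow> r n k > 0" and n: "n \<ge> 1"
  shows "H1_term r p n \<ge> 0"
  unfolding H1_term_def using r_pos[OF n] by (intro sum_nonneg divide_nonneg_pos) auto

lemma ww_integral:
  assumes r_pos: "\<And>n k. n \<ge> 1 \<Longrightarrow> k < 2^n \<Longrightarrow> r n k > 0"
  shows "(\<integral>x. ww r p n x \<partial>haar_Z2) \<le> H1_term r p (Suc n)"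
proof -
  define M where "M = Max ((r (Suc n)) ` {..<2^(Suc n)})"
  define \<delta> where "\<delta> k = p (Suc n) k - p n (k mod 2^n)" for k
  have aM: "aa r n * 2^(Suc n) = M" unfolding aa_def M_def by simp
  have "ww r p n = (\<lambda>x. (\<lambda>k. (\<delta> k)^2 / aa r n) (res (Suc n) x))"
    by (rule ext) (simp add: ww_def dd_res \<delta>_def)
  then have "(\<integral>x. ww r p n x \<partial>haar_Z2) = (\<Sum>k<2^(Suc n). (\<delta> k)^2 / aa r n) / 2^(Suc n)"
    using res_integral[of "\<lambda>k. (\<delta> k)^2 / aa r n" "Suc n"] by simp
  also have "\<dots> = (\<Sum>k<2^(Suc n). (\<delta> k)^2 / M)"
    by (simp add: sum_divide_distrib aM[symmetric] del: power_Suc)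
  also have "\<dots> \<le> (\<Sum>k<2^(Suc n). (\<delta> k)^2 / r (Suc n) k)"
  proof (rule sum_mono)
    fix k assume k: "k \<in> {..<(2::nat)^(Suc n)}"
    have rk: "r (Suc n) k > 0" using k by (intro r_pos) auto
    have "r (Suc n) k \<le> M" unfolding M_def using k by (intro Max_r_ge[OF r_pos]) auto
    then show "(\<delta> k)^2 / M \<le> (\<delta> k)^2 / r (Suc n) k"
      using rk by (intro divide_left_mono) auto
  qed
  also have "\<dots> = H1_term r p (Suc n)" unfolding H1_term_def \<delta>_def by simp
  finally show ?thesis .
qed



lemma tilde0: "tilde p 0 x = p 0 0"
  by (simp add: tilde_def res_def)

lemma construct:
  fixes r p :: "nat \<Rightarrow> nat \<Rightarrow> real"
  assumes r_pos': "\<forall>n k. n \<ge> 1 \<longrightarrow> k < 2^n \<longrightarrow> r n k > 0"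
    and sa: "summable (aa r)" and hp: "in_H1 r p"
  shows "\<exists>f. in_L2 f \<and> L2_converges (tilde p) f \<and>
      (\<integral>x. (f x)^2 \<partial>haar_Z2) \<le> 2 * (p 0 0)^2 + 2 * (\<Sum>n. aa r n) * H1_seminorm_sq r p"
proof -
  have r_pos: "\<And>n k. n \<ge> 1 \<Longrightarrow> k < 2^n \<Longrightarrow> r n k > 0" using r_pos' by blast
  interpret prob_space haar_Z2 by (rule prob_haar)
  define h where "h n = H1_term r p (Suc n)" for n
  have sh: "summable h" using hp unfolding in_H1_def h_def .
  have hnn: "h n \<ge> 0" for n unfolding h_def using H1_term_nonneg[OF r_pos, where n="Suc n" and p=p] by simp
  have apos: "aa r n > 0" for n by (rule aa_pos[OF r_pos])
  have wnn: "ww r p n x \<ge> 0" for n x unfolding ww_def using apos[of n] by simp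
  have wint: "(\<integral>x. ww r p n x \<partial>haar_Z2) \<le> h n" for n unfolding h_def by (rule ww_integral[OF r_pos])
  have dsq: "(dd p n x)^2 = aa r n * ww r p n x" for n x unfolding ww_def using apos[of n] by simp
  have "(\<integral>\<^sup>+x. (\<Sum>n. ennreal (ww r p n x)) \<partial>haar_Z2) = (\<Sum>n. \<integral>\<^sup>+x. ennreal (ww r p n x) \<partial>haar_Z2)"
    by (rule nn_integral_suminf) measurable
  also have "\<dots> = (\<Sum>n. ennreal (\<integral>x. ww r p n x \<partial>haar_Z2))"
    by (intro arg_cong[where f=suminf] ext nn_integral_eq_integral ww_integrable) (simp add: wnn)
  also have "\<dots> \<le> (\<Sum>n. ennreal (h n))"
    by (intro suminf_le summableI) (simp add: wint ennreal_leI)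
  also have "\<dots> = ennreal (\<Sum>n. h n)" by (rule suminf_ennreal2[OF hnn sh])
  finally have "(\<integral>\<^sup>+x. (\<Sum>n. ennreal (ww r p n x)) \<partial>haar_Z2) \<noteq> \<infinity>"
    by (auto simp: top_unique)
  then have "AE x in haar_Z2. (\<Sum>n. ennreal (ww r p n x)) \<noteq> \<infinity>"
    by (intro nn_integral_PInf_AE) measurable
  then have AEs: "AE x in haar_Z2. summable (\<lambda>n. ww r p n x)"
    by eventually_elim (rule summable_suminf_not_top, simp_all add: wnn)
  define G where "G x = (\<Sum>n. ww r p n x)" for x
  have nw: "norm (ww r p n x) = ww r p n x" for n x using wnn[of n x] by simp
  have sint: "summable (\<lambda>n. \<integral>x. norm (ww r p n x) \<partial>haar_Z2)"
  proof -
    have "norm (\<integral>x. ww r p n x \<partial>haar_Z2) \<le> h n" for n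
    proof -
      have "0 \<le> (\<integral>x. ww r p n x \<partial>haar_Z2)" by (rule integral_nonneg_AE) (simp add: wnn)
      then show ?thesis using wint[of n] by simp
    qed
    then show ?thesis unfolding nw by (rule summable_comparison_test'[OF sh])
  qed
  have AEs': "AE x in haar_Z2. summable (\<lambda>n. norm (ww r p n x))" unfolding nw by (rule AEs)
  have Gint: "integrable haar_Z2 G"
    unfolding G_def by (rule integrable_suminf[OF ww_integrable AEs' sint])
  have "(\<integral>x. G x \<partial>haar_Z2) = (\<Sum>n. \<integral>x. ww r p n x \<partial>haar_Z2)"
    unfolding G_def by (rule integral_suminf[OF ww_integrable AEs' sint])
  also have "\<dots> \<le> (\<Sum>n. h n)"
    using sint unfolding nw by (intro suminf_le wint sh) 
  finally have Gle: "(\<integral>x. G x \<partial>haar_Z2) \<le> H1_seminorm_sq r p" unfolding H1_seminorm_sq_def h_def .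
  have Gnn: "G x \<ge> 0" if "summable (\<lambda>n. ww r p n x)" for x
    unfolding G_def using that by (intro suminf_nonneg wnn)
  define T where "T N = (\<Sum>n. aa r (n + N))" for N
  have sT: "summable (\<lambda>n. aa r (n + N))" for N using sa by (rule summable_ignore_initial_segment)
  have Tnn: "T N \<ge> 0" for N unfolding T_def by (intro suminf_nonneg sT less_imp_le apos)
  have T0: "T 0 = (\<Sum>n. aa r n)" unfolding T_def by simp
  have Tlim: "T \<longlonglongrightarrow> 0"
  proof -
    have "T = (\<lambda>N. (\<Sum>n. aa r n) - (\<Sum>i<N. aa r i))"
      unfolding T_def by (rule ext) (rule suminf_minus_initial_segment[OF sa])
    moreover have "(\<lambda>N. (\<Sum>n. aa r n) - (\<Sum>i<N. aa r i)) \<longlonglongrightarrow> (\<Sum>n. aa r n) - (\<Sum>n. aa r n)"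
      by (intro tendsto_diff tendsto_const summable_LIMSEQ sa)
    ultimately show ?thesis by simp
  qed
  define f where "f x = tilde p 0 x + (\<Sum>n. dd p n x)" for x
  have fmeas[measurable]: "f \<in> borel_measurable haar_Z2" unfolding f_def[abs_def] by measurable
  have Gmeas[measurable]: "G \<in> borel_measurable haar_Z2" unfolding G_def[abs_def] by measurable
  have pw: "(f x - tilde p N x)^2 \<le> T N * G x" if sx: "summable (\<lambda>n. ww r p n x)" for x N
  proof -
    have sxN: "summable (\<lambda>n. ww r p (n + N) x)" using sx by (rule summable_ignore_initial_segment)
    have cs1: "summable (\<lambda>n. \<bar>dd p (n + N) x\<bar>)" and
      cs2: "(\<Sum>n. dd p (n + N) x)^2 \<le> (\<Sum>n. aa r (n + N)) * (\<Sum>n. ww r p (n + N) x)"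
      using cs_series[of "\<lambda>n. aa r (n + N)" "\<lambda>n. ww r p (n + N) x" "\<lambda>n. dd p (n + N) x"]
        apos sT wnn sxN dsq by auto
    have sd0: "summable (\<lambda>n. \<bar>dd p n x\<bar>)"
      using cs_series[of "\<lambda>n. aa r n" "\<lambda>n. ww r p n x" "\<lambda>n. dd p n x"] apos sa wnn sx dsq by auto
    then have sd: "summable (\<lambda>n. dd p n x)" by (rule summable_rabs_cancel)
    have "(\<Sum>n. dd p n x) = (\<Sum>n. dd p (n + N) x) + (\<Sum>i<N. dd p i x)"
      by (rule suminf_split_initial_segment[OF sd])
    moreover have "(\<Sum>i<N. dd p i x) = tilde p N x - tilde p 0 x"
      unfolding dd_def by (rule sum_lessThan_telescope)
    ultimately have e: "f x - tilde p N x = (\<Sum>n. dd p (n + N) x)" unfolding f_def by simp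
    have "(\<Sum>n. ww r p (n + N) x) = G x - (\<Sum>i<N. ww r p i x)"
      unfolding G_def by (rule suminf_minus_initial_segment[OF sx])
    also have "\<dots> \<le> G x" by (simp add: sum_nonneg wnn)
    finally have "(\<Sum>n. ww r p (n + N) x) \<le> G x" .
    then have "(\<Sum>n. aa r (n + N)) * (\<Sum>n. ww r p (n + N) x) \<le> T N * G x"
      unfolding T_def[symmetric] using Tnn[of N] by (rule mult_left_mono)
    then show ?thesis using e cs2 by simp
  qed
  have pw0: "(f x)^2 \<le> 2 * (p 0 0)^2 + 2 * T 0 * G x" if sx: "summable (\<lambda>n. ww r p n x)" for x
  proof -
    have "(f x)^2 = (p 0 0 + (f x - tilde p 0 x))^2" by (simp add: tilde0)
    also have "\<dots> \<le> 2 * (p 0 0)^2 + 2 * (f x - tilde p 0 x)^2"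
    proof -
      have "0 \<le> (p 0 0 - (f x - tilde p 0 x))^2" by simp
      then show ?thesis by (simp add: power2_eq_square algebra_simps)
    qed
    also have "\<dots> \<le> 2 * (p 0 0)^2 + 2 * (T 0 * G x)" using pw[OF sx, of 0] by simp
    finally show ?thesis by simp
  qed
  have bint: "integrable haar_Z2 (\<lambda>x. 2 * (p 0 0)^2 + 2 * T 0 * G x)"
    using Gint by (intro Bochner_Integration.integrable_add integrable_mult_right) auto
  have f2int: "integrable haar_Z2 (\<lambda>x. (f x)^2)"
  proof (rule Bochner_Integration.integrable_bound[OF bint])
    show "AE x in haar_Z2. norm ((f x)^2) \<le> norm (2 * (p 0 0)^2 + 2 * T 0 * G x)"
      using AEs
    proof eventually_elim
      case (elim x)
      have "0 \<le> 2 * T 0 * G x" using Gnn[OF elim] Tnn[of 0] by simp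
      then show ?case using pw0[OF elim] by simp
    qed
  qed measurable
  have L2f: "in_L2 f" unfolding in_L2_def using f2int by simp
  have dint: "integrable haar_Z2 (\<lambda>x. (tilde p N x - f x)^2)" for N
  proof (rule Bochner_Integration.integrable_bound[OF integrable_mult_right[OF Gint, of "T N"]])
    show "AE x in haar_Z2. norm ((tilde p N x - f x)^2) \<le> norm (T N * G x)"
      using AEs
    proof eventually_elim
      case (elim x)
      have "0 \<le> T N * G x" using Gnn[OF elim] Tnn[of N] by simp
      then show ?case using pw[OF elim, of N] by (simp add: power2_commute)
    qed
  qed measurable
  have Ile: "(\<integral>x. (tilde p N x - f x)^2 \<partial>haar_Z2) \<le> T N * (\<integral>x. G x \<partial>haar_Z2)" for N
  proof -
    have "(\<integral>x. (tilde p N x - f x)^2 \<partial>haar_Z2) \<le> (\<integral>x. T N * G x \<partial>haar_Z2)"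
      by (rule integral_mono_AE[OF dint integrable_mult_right[OF Gint]])
        (use AEs in \<open>eventually_elim, use pw in \<open>simp add: power2_commute\<close>\<close>)
    then show ?thesis by simp
  qed
  have "(\<lambda>N. \<integral>x. (tilde p N x - f x)^2 \<partial>haar_Z2) \<longlonglongrightarrow> 0"
  proof (rule tendsto_sandwich[of "\<lambda>_. 0" _ _ "\<lambda>N. T N * (\<integral>x. G x \<partial>haar_Z2)"])
    show "\<forall>\<^sub>F N in sequentially. 0 \<le> (\<integral>x. (tilde p N x - f x)^2 \<partial>haar_Z2)"
      by (simp add: integral_nonneg_AE)
    show "\<forall>\<^sub>F N in sequentially. (\<integral>x. (tilde p N x - f x)^2 \<partial>haar_Z2) \<le> T N * (\<integral>x. G x \<partial>haar_Z2)"
      using Ile by simp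
    show "(\<lambda>N. T N * (\<integral>x. G x \<partial>haar_Z2)) \<longlonglongrightarrow> 0"
      using tendsto_mult_left_zero[OF Tlim] by simp
  qed simp
  then have "(\<lambda>N. sqrt (\<integral>x. (tilde p N x - f x)^2 \<partial>haar_Z2)) \<longlonglongrightarrow> sqrt 0"
    by (rule tendsto_real_sqrt)
  then have conv: "L2_converges (tilde p) f" unfolding L2_converges_def L2_norm_def by simp
  have "(\<integral>x. (f x)^2 \<partial>haar_Z2) \<le> (\<integral>x. 2 * (p 0 0)^2 + 2 * T 0 * G x \<partial>haar_Z2)"
    by (rule integral_mono_AE[OF f2int bint]) (use AEs in \<open>eventually_elim, use pw0 in simp\<close>)
  also have "\<dots> = 2 * (p 0 0)^2 + 2 * T 0 * (\<integral>x. G x \<partial>haar_Z2)"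
    using Gint by (simp add: prob_space)
  also have "\<dots> \<le> 2 * (p 0 0)^2 + 2 * T 0 * H1_seminorm_sq r p"
    using Gle Tnn[of 0] by (simp add: mult_left_mono)
  finally show ?thesis using L2f conv T0 by auto
qed



lemma sq_sum_le: "((u::real) + v)^2 \<le> 2 * u^2 + 2 * v^2"
proof -
  have "0 \<le> (u - v)^2" by simp
  then show ?thesis by (simp add: power2_eq_square algebra_simps)
qed

lemma in_L2_lin: "in_L2 f \<Longrightarrow> in_L2 g \<Longrightarrow> in_L2 (\<lambda>x. a * f x + b * g x)"
proof -
  assume f: "in_L2 f" and g: "in_L2 g"
  have [measurable]: "f \<in> borel_measurable haar_Z2" "g \<in> borel_measurable haar_Z2"
    using f g unfolding in_L2_def by auto
  have bi: "integrable haar_Z2 (\<lambda>x. 2 * a^2 * (f x)^2 + 2 * b^2 * (g x)^2)"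
    using f g unfolding in_L2_def by (intro Bochner_Integration.integrable_add integrable_mult_right) auto
  have "integrable haar_Z2 (\<lambda>x. (a * f x + b * g x)^2)"
  proof (rule Bochner_Integration.integrable_bound[OF bi])
    show "AE x in haar_Z2. norm ((a * f x + b * g x)^2) \<le> norm (2 * a^2 * (f x)^2 + 2 * b^2 * (g x)^2)"
    proof (rule AE_I2)
      fix x
      have "(a * f x + b * g x)^2 \<le> 2 * (a * f x)^2 + 2 * (b * g x)^2" by (rule sq_sum_le)
      also have "\<dots> = 2 * a^2 * (f x)^2 + 2 * b^2 * (g x)^2" by (simp add: power_mult_distrib)
      finally show "norm ((a * f x + b * g x)^2) \<le> norm (2 * a^2 * (f x)^2 + 2 * b^2 * (g x)^2)"
        by simp
    qed
  qed measurable
  then show "in_L2 (\<lambda>x. a * f x + b * g x)" unfolding in_L2_def by simp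
qed

lemma in_L2_tilde: "in_L2 (tilde p n)"
  unfolding in_L2_def using tilde_integrable[of "\<lambda>v. v^2"] by simp

lemma int_nonneg_sq: "0 \<le> (\<integral>x. (f x :: real)^2 \<partial>haar_Z2)"
  by (rule integral_nonneg_AE) simp

lemma L2conv_iff: "L2_converges fs f \<longleftrightarrow> (\<lambda>n. \<integral>x. (fs n x - f x)^2 \<partial>haar_Z2) \<longlonglongrightarrow> 0"
proof
  assume "L2_converges fs f"
  then have "(\<lambda>n. sqrt (\<integral>x. (fs n x - f x)^2 \<partial>haar_Z2)) \<longlonglongrightarrow> 0"
    unfolding L2_converges_def L2_norm_def .
  then have "(\<lambda>n. (sqrt (\<integral>x. (fs n x - f x)^2 \<partial>haar_Z2))^2) \<longlonglongrightarrow> 0^2"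
    by (rule tendsto_power)
  then show "(\<lambda>n. \<integral>x. (fs n x - f x)^2 \<partial>haar_Z2) \<longlonglongrightarrow> 0"
    using int_nonneg_sq by simp
next
  assume "(\<lambda>n. \<integral>x. (fs n x - f x)^2 \<partial>haar_Z2) \<longlonglongrightarrow> 0"
  then have "(\<lambda>n. sqrt (\<integral>x. (fs n x - f x)^2 \<partial>haar_Z2)) \<longlonglongrightarrow> sqrt 0"
    by (rule tendsto_real_sqrt)
  then show "L2_converges fs f" unfolding L2_converges_def L2_norm_def by simp
qed

lemma L2_unique:
  assumes f: "in_L2 f" and g: "in_L2 g" and fs: "\<And>n. in_L2 (fs n)"
    and cf: "L2_converges fs f" and cg: "L2_converges fs g"
  shows "AE x in haar_Z2. f x = g x"
proof -
  have [measurable]: "f \<in> borel_measurable haar_Z2" "g \<in> borel_measurable haar_Z2"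
    using f g unfolding in_L2_def by auto
  have i1: "integrable haar_Z2 (\<lambda>x. (f x - g x)^2)"
    using in_L2_lin[OF f g, where a=1 and b="-1"] unfolding in_L2_def by simp
  have i2: "integrable haar_Z2 (\<lambda>x. (fs n x - f x)^2)" for n
    using in_L2_lin[OF fs f, where a=1 and b="-1"] unfolding in_L2_def by simp
  have i3: "integrable haar_Z2 (\<lambda>x. (fs n x - g x)^2)" for n
    using in_L2_lin[OF fs g, where a=1 and b="-1"] unfolding in_L2_def by simp
  have le: "(\<integral>x. (f x - g x)^2 \<partial>haar_Z2) \<le>
      2 * (\<integral>x. (fs n x - f x)^2 \<partial>haar_Z2) + 2 * (\<integral>x. (fs n x - g x)^2 \<partial>haar_Z2)" for n
  proof -
    have "(\<integral>x. (f x - g x)^2 \<partial>haar_Z2) \<le>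
      (\<integral>x. 2 * (fs n x - f x)^2 + 2 * (fs n x - g x)^2 \<partial>haar_Z2)"
    proof (rule integral_mono[OF i1])
      show "integrable haar_Z2 (\<lambda>x. 2 * (fs n x - f x)^2 + 2 * (fs n x - g x)^2)"
        using i2 i3 by (intro Bochner_Integration.integrable_add integrable_mult_right) auto
      fix x
      have "(f x - g x)^2 = ((f x - fs n x) + (fs n x - g x))^2" by simp
      also have "\<dots> \<le> 2 * (f x - fs n x)^2 + 2 * (fs n x - g x)^2" by (rule sq_sum_le)
      finally show "(f x - g x)^2 \<le> 2 * (fs n x - f x)^2 + 2 * (fs n x - g x)^2"
        by (simp add: power2_commute)
    qed
    also have "\<dots> = 2 * (\<integral>x. (fs n x - f x)^2 \<partial>haar_Z2) + 2 * (\<integral>x. (fs n x - g x)^2 \<partial>haar_Z2)"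
      using i2 i3 by simp
    finally show ?thesis .
  qed
  have "(\<lambda>n. 2 * (\<integral>x. (fs n x - f x)^2 \<partial>haar_Z2) + 2 * (\<integral>x. (fs n x - g x)^2 \<partial>haar_Z2)) \<longlonglongrightarrow> 2 * 0 + 2 * 0"
    using cf cg unfolding L2conv_iff by (intro tendsto_add tendsto_mult tendsto_const)
  then have "(\<integral>x. (f x - g x)^2 \<partial>haar_Z2) \<le> 2 * 0 + 2 * 0"
    using le by (intro LIMSEQ_le_const) auto
  then have "(\<integral>x. (f x - g x)^2 \<partial>haar_Z2) = 0" using int_nonneg_sq[of "\<lambda>x. f x - g x"] by simp
  then have "AE x in haar_Z2. (f x - g x)^2 = 0"
    using integral_nonneg_eq_0_iff_AE[OF i1] by simp
  then show ?thesis by eventually_elim simp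
qed



lemma gamma0_spec: "\<exists>f. in_L2 f \<and> L2_converges (tilde p) f \<Longrightarrow> in_L2 (gamma0 p) \<and> L2_converges (tilde p) (gamma0 p)"
  unfolding gamma0_def by (rule someI_ex[where P="\<lambda>f. in_L2 f \<and> L2_converges (tilde p) f"])

lemma H1_lin:
  fixes r p q :: "nat \<Rightarrow> nat \<Rightarrow> real"
  assumes r_pos: "\<And>n k. n \<ge> 1 \<Longrightarrow> k < 2^n \<Longrightarrow> r n k > 0"
    and hp: "in_H1 r p" and hq: "in_H1 r q"
  shows "in_H1 r (\<lambda>n k. a * p n k + b * q n k)"
proof -
  have le: "norm (H1_term r (\<lambda>n k. a * p n k + b * q n k) (Suc n)) \<le>
      2 * a^2 * H1_term r p (Suc n) + 2 * b^2 * H1_term r q (Suc n)" for n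
  proof -
    have nn: "H1_term r (\<lambda>n k. a * p n k + b * q n k) (Suc n) \<ge> 0"
      using H1_term_nonneg[OF r_pos, where n="Suc n"] by simp
    have "H1_term r (\<lambda>n k. a * p n k + b * q n k) (Suc n) \<le>
      (\<Sum>k<2^Suc n. 2 * a^2 * ((p (Suc n) k - p n (k mod 2^n))^2 / r (Suc n) k)
         + 2 * b^2 * ((q (Suc n) k - q n (k mod 2^n))^2 / r (Suc n) k))"
      unfolding H1_term_def
    proof (rule sum_mono)
      fix k assume k: "k \<in> {..<(2::nat)^Suc n}"
      have rk: "r (Suc n) k > 0" using k by (intro r_pos) auto
      have "(a * p (Suc n) k + b * q (Suc n) k - (a * p (Suc n - 1) (k mod 2 ^ (Suc n - 1)) + b * q (Suc n - 1) (k mod 2 ^ (Suc n - 1))))^2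
          = (a * (p (Suc n) k - p n (k mod 2^n)) + b * (q (Suc n) k - q n (k mod 2^n)))^2"
        by (simp add: algebra_simps)
      also have "\<dots> \<le> 2 * (a * (p (Suc n) k - p n (k mod 2^n)))^2 + 2 * (b * (q (Suc n) k - q n (k mod 2^n)))^2"
        by (rule sq_sum_le)
      finally have "(a * p (Suc n) k + b * q (Suc n) k - (a * p (Suc n - 1) (k mod 2 ^ (Suc n - 1)) + b * q (Suc n - 1) (k mod 2 ^ (Suc n - 1))))^2 / r (Suc n) k
          \<le> (2 * (a * (p (Suc n) k - p n (k mod 2^n)))^2 + 2 * (b * (q (Suc n) k - q n (k mod 2^n)))^2) / r (Suc n) k"
        using rk by (intro divide_right_mono) auto
      then show "(a * p (Suc n) k + b * q (Suc n) k - (a * p (Suc n - 1) (k mod 2 ^ (Suc n - 1)) + b * q (Suc n - 1) (k mod 2 ^ (Suc n - 1))))^2 / r (Suc n) k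
          \<le> 2 * a^2 * ((p (Suc n) k - p n (k mod 2^n))^2 / r (Suc n) k)
         + 2 * b^2 * ((q (Suc n) k - q n (k mod 2^n))^2 / r (Suc n) k)"
        by (simp add: power_mult_distrib add_divide_distrib)
    qed
    also have "\<dots> = 2 * a^2 * H1_term r p (Suc n) + 2 * b^2 * H1_term r q (Suc n)"
      unfolding H1_term_def by (simp add: sum.distrib sum_distrib_left)
    finally show ?thesis using nn by simp
  qed
  have "summable (\<lambda>n. 2 * a^2 * H1_term r p (Suc n) + 2 * b^2 * H1_term r q (Suc n))"
    using hp hq unfolding in_H1_def by (intro summable_add summable_mult)
  then show ?thesis unfolding in_H1_def using le by (rule summable_comparison_test')
qed

lemma L2_diff_int: "in_L2 f \<Longrightarrow> in_L2 g \<Longrightarrow> integrable haar_Z2 (\<lambda>x. (f x - g x)^2)"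
proof -
  assume "in_L2 f" "in_L2 g"
  then have "in_L2 (\<lambda>x. 1 * f x + (-1) * g x)" by (rule in_L2_lin)
  then show ?thesis unfolding in_L2_def by simp
qed

lemma lin_part:
  fixes r p q :: "nat \<Rightarrow> nat \<Rightarrow> real" and a b :: real
  assumes r_pos': "\<forall>n k. n \<ge> 1 \<longrightarrow> k < 2^n \<longrightarrow> r n k > 0"
    and sa: "summable (aa r)" and hp: "in_H1 r p" and hq: "in_H1 r q"
  shows "AE x in haar_Z2. gamma0 (\<lambda>n k. a * p n k + b * q n k) x = a * gamma0 p x + b * gamma0 q x"
proof -
  have r_pos: "\<And>n k. n \<ge> 1 \<Longrightarrow> k < 2^n \<Longrightarrow> r n k > 0" using r_pos' by blast
  have ex: "\<exists>f. in_L2 f \<and> L2_converges (tilde p) f" if "in_H1 r p" for p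
    using construct[OF r_pos' sa that] by blast
  have gs: "in_L2 (gamma0 p) \<and> L2_converges (tilde p) (gamma0 p)" if "in_H1 r p" for p
    by (rule gamma0_spec[OF ex[OF that]])
  define pq where "pq = (\<lambda>n k. a * p n k + b * q n k)"
  have hpq: "in_H1 r pq" unfolding pq_def by (rule H1_lin[OF r_pos hp hq])
  have Fp: "in_L2 (gamma0 p)" "L2_converges (tilde p) (gamma0 p)" using gs[OF hp] by auto
  have Fq: "in_L2 (gamma0 q)" "L2_converges (tilde q) (gamma0 q)" using gs[OF hq] by auto
  have Fpq: "in_L2 (gamma0 pq)" "L2_converges (tilde pq) (gamma0 pq)" using gs[OF hpq] by auto
  have tpq: "tilde pq n x = a * tilde p n x + b * tilde q n x" for n x
    unfolding pq_def tilde_def by simp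
  have lin: "in_L2 (\<lambda>x. a * gamma0 p x + b * gamma0 q x)" by (rule in_L2_lin[OF Fp(1) Fq(1)])
  have i2: "integrable haar_Z2 (\<lambda>x. (tilde p n x - gamma0 p x)^2)" for n
    by (rule L2_diff_int[OF in_L2_tilde Fp(1)])
  have i3: "integrable haar_Z2 (\<lambda>x. (tilde q n x - gamma0 q x)^2)" for n
    by (rule L2_diff_int[OF in_L2_tilde Fq(1)])
  have i1: "integrable haar_Z2 (\<lambda>x. (tilde pq n x - (a * gamma0 p x + b * gamma0 q x))^2)" for n
    by (rule L2_diff_int[OF in_L2_tilde lin])
  have le: "(\<integral>x. (tilde pq n x - (a * gamma0 p x + b * gamma0 q x))^2 \<partial>haar_Z2) \<le>
      2 * a^2 * (\<integral>x. (tilde p n x - gamma0 p x)^2 \<partial>haar_Z2) + 2 * b^2 * (\<integral>x. (tilde q n x - gamma0 q x)^2 \<partial>haar_Z2)" for n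
  proof -
    have "(\<integral>x. (tilde pq n x - (a * gamma0 p x + b * gamma0 q x))^2 \<partial>haar_Z2) \<le>
      (\<integral>x. 2 * a^2 * (tilde p n x - gamma0 p x)^2 + 2 * b^2 * (tilde q n x - gamma0 q x)^2 \<partial>haar_Z2)"
    proof (rule integral_mono[OF i1])
      show "integrable haar_Z2 (\<lambda>x. 2 * a^2 * (tilde p n x - gamma0 p x)^2 + 2 * b^2 * (tilde q n x - gamma0 q x)^2)"
        using i2 i3 by (intro Bochner_Integration.integrable_add integrable_mult_right) auto
      fix x
      have "(tilde pq n x - (a * gamma0 p x + b * gamma0 q x))^2 = (a * (tilde p n x - gamma0 p x) + b * (tilde q n x - gamma0 q x))^2"
        unfolding tpq by (rule arg_cong[where f="\<lambda>t. t^2"]) (simp add: algebra_simps)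
      also have "\<dots> \<le> 2 * (a * (tilde p n x - gamma0 p x))^2 + 2 * (b * (tilde q n x - gamma0 q x))^2"
        by (rule sq_sum_le)
      finally show "(tilde pq n x - (a * gamma0 p x + b * gamma0 q x))^2 \<le> 2 * a^2 * (tilde p n x - gamma0 p x)^2 + 2 * b^2 * (tilde q n x - gamma0 q x)^2"
        by (simp add: power_mult_distrib)
    qed
    also have "\<dots> = (\<integral>x. 2 * a^2 * (tilde p n x - gamma0 p x)^2 \<partial>haar_Z2) + (\<integral>x. 2 * b^2 * (tilde q n x - gamma0 q x)^2 \<partial>haar_Z2)"
      by (intro Bochner_Integration.integral_add integrable_mult_right i2 i3)
    also have "\<dots> = 2 * a^2 * (\<integral>x. (tilde p n x - gamma0 p x)^2 \<partial>haar_Z2) + 2 * b^2 * (\<integral>x. (tilde q n x - gamma0 q x)^2 \<partial>haar_Z2)"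
      by (simp only: integral_mult_right_zero)
    finally show ?thesis .
  qed
  have "(\<lambda>n. \<integral>x. (tilde pq n x - (a * gamma0 p x + b * gamma0 q x))^2 \<partial>haar_Z2) \<longlonglongrightarrow> 0"
  proof (rule tendsto_sandwich[of "\<lambda>_. 0" _ _ "\<lambda>n. 2 * a^2 * (\<integral>x. (tilde p n x - gamma0 p x)^2 \<partial>haar_Z2) + 2 * b^2 * (\<integral>x. (tilde q n x - gamma0 q x)^2 \<partial>haar_Z2)"])
    show "\<forall>\<^sub>F n in sequentially. 0 \<le> (\<integral>x. (tilde pq n x - (a * gamma0 p x + b * gamma0 q x))^2 \<partial>haar_Z2)"
      by (intro always_eventually allI int_nonneg_sq)
    show "\<forall>\<^sub>F n in sequentially. (\<integral>x. (tilde pq n x - (a * gamma0 p x + b * gamma0 q x))^2 \<partial>haar_Z2) \<le> 2 * a^2 * (\<integral>x. (tilde p n x - gamma0 p x)^2 \<partial>haar_Z2) + 2 * b^2 * (\<integral>x. (tilde q n x - gamma0 q x)^2 \<partial>haar_Z2)"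
      by (intro always_eventually allI le)
    have "(\<lambda>n. 2 * a^2 * (\<integral>x. (tilde p n x - gamma0 p x)^2 \<partial>haar_Z2) + 2 * b^2 * (\<integral>x. (tilde q n x - gamma0 q x)^2 \<partial>haar_Z2)) \<longlonglongrightarrow> 2 * a^2 * 0 + 2 * b^2 * 0"
      using Fp(2) Fq(2) unfolding L2conv_iff by (intro tendsto_add tendsto_mult tendsto_const)
    then show "(\<lambda>n. 2 * a^2 * (\<integral>x. (tilde p n x - gamma0 p x)^2 \<partial>haar_Z2) + 2 * b^2 * (\<integral>x. (tilde q n x - gamma0 q x)^2 \<partial>haar_Z2)) \<longlonglongrightarrow> 0"
      by simp
  qed simp
  then have "L2_converges (tilde pq) (\<lambda>x. a * gamma0 p x + b * gamma0 q x)" unfolding L2conv_iff .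
  then have "AE x in haar_Z2. gamma0 pq x = a * gamma0 p x + b * gamma0 q x"
    by (rule L2_unique[OF Fpq(1) lin in_L2_tilde Fpq(2)])
  then show "AE x in haar_Z2. gamma0 (\<lambda>n k. a * p n k + b * q n k) x = a * gamma0 p x + b * gamma0 q x"
    unfolding pq_def .
qed

theorem proposition2p1:
  fixes r :: "nat \<Rightarrow> nat \<Rightarrow> real"
  assumes r_pos: "\<And>n k. n \<ge> 1 \<Longrightarrow> k < 2^n \<Longrightarrow> r n k > 0"
    and summ: "summable (\<lambda>n. (1 / 2^(Suc n)) * Max ((r (Suc n)) ` {..<2^(Suc n)}))"
  shows "(\<forall>p. in_H1 r p \<longrightarrow> (\<exists>f. in_L2 f \<and> L2_converges (tilde p) f))
    \<and> (\<forall>p q a b. in_H1 r p \<longrightarrow> in_H1 r q \<longrightarrow>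
         (AE x in haar_Z2. gamma0 (\<lambda>n k. a * p n k + b * q n k) x = a * gamma0 p x + b * gamma0 q x))
    \<and> (\<exists>C. \<forall>p. in_H1 r p \<longrightarrow> L2_norm (gamma0 p) \<le> C * H1_norm r p)"
proof -
  have r_pos': "\<forall>n k. n \<ge> 1 \<longrightarrow> k < 2^n \<longrightarrow> r n k > 0" using r_pos by blast
  have sa: "summable (aa r)" using summ unfolding aa_def[abs_def] .
  have P1: "\<forall>p. in_H1 r p \<longrightarrow> (\<exists>f. in_L2 f \<and> L2_converges (tilde p) f)"
  proof (intro allI impI)
    fix p assume "in_H1 r p"
    then show "\<exists>f. in_L2 f \<and> L2_converges (tilde p) f" using construct[OF r_pos' sa] by blast
  qed
  have P2: "\<forall>p q a b. in_H1 r p \<longrightarrow> in_H1 r q \<longrightarrow>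
         (AE x in haar_Z2. gamma0 (\<lambda>n k. a * p n k + b * q n k) x = a * gamma0 p x + b * gamma0 q x)"
    using lin_part[OF r_pos' sa] by blast
  define A where "A = (\<Sum>n. aa r n)"
  have apos: "aa r n > 0" for n by (rule aa_pos) (rule r_pos)
  have A0: "A \<ge> 0" unfolding A_def by (intro suminf_nonneg sa less_imp_le apos)
  have P3: "\<forall>p. in_H1 r p \<longrightarrow> L2_norm (gamma0 p) \<le> sqrt (2 + 2 * A) * H1_norm r p"
  proof (intro allI impI)
    fix p assume hp: "in_H1 r p"
    obtain f where f: "in_L2 f" "L2_converges (tilde p) f"
      and fb: "(\<integral>x. (f x)^2 \<partial>haar_Z2) \<le> 2 * (p 0 0)^2 + 2 * A * H1_seminorm_sq r p"
      using construct[OF r_pos' sa hp] unfolding A_def by blast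
    have gs: "in_L2 (gamma0 p)" "L2_converges (tilde p) (gamma0 p)"
      using gamma0_spec[of p] f by auto
    have [measurable]: "f \<in> borel_measurable haar_Z2" "gamma0 p \<in> borel_measurable haar_Z2"
      using f gs unfolding in_L2_def by auto
    have "AE x in haar_Z2. gamma0 p x = f x"
      by (rule L2_unique[OF gs(1) f(1) in_L2_tilde gs(2) f(2)])
    then have "(\<integral>x. (gamma0 p x)^2 \<partial>haar_Z2) = (\<integral>x. (f x)^2 \<partial>haar_Z2)"
      by (intro integral_cong_AE) auto
    also have "\<dots> \<le> 2 * (p 0 0)^2 + 2 * A * H1_seminorm_sq r p" by (rule fb)
    also have "\<dots> \<le> (2 + 2 * A) * ((p 0 0)^2 + H1_seminorm_sq r p)"
    proof -
      have hs: "H1_seminorm_sq r p \<ge> 0" unfolding H1_seminorm_sq_def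
      proof (rule suminf_nonneg)
        show "summable (\<lambda>n. H1_term r p (Suc n))" using hp unfolding in_H1_def .
        show "0 \<le> H1_term r p (Suc n)" for n by (rule H1_term_nonneg) (rule r_pos, simp_all)
      qed
      have "0 \<le> 2 * A * (p 0 0)^2 + 2 * H1_seminorm_sq r p" using A0 hs by simp
      then show ?thesis by (simp add: algebra_simps)
    qed
    finally have "sqrt (\<integral>x. (gamma0 p x)^2 \<partial>haar_Z2) \<le> sqrt ((2 + 2 * A) * ((p 0 0)^2 + H1_seminorm_sq r p))"
      by (rule real_sqrt_le_mono)
    then show "L2_norm (gamma0 p) \<le> sqrt (2 + 2 * A) * H1_norm r p"
      unfolding L2_norm_def H1_norm_def by (simp add: real_sqrt_mult)
  qed
  show ?thesis using P1 P2 P3 by blast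
qed

end
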